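(* Let $(X,d_X,\mu,T)$ and $(Y,d_Y,\nu,S)$ be compact metric measure-preserving systems with anchor sequences $(a_r)$ dense in $\operatorname{supp}\mu$ and $(b_r)$ dense in $\operatorname{supp}\nu$, and fix $p\ge1$. Then $\widetilde{\mathrm{Dep}}_{n,m,R,p}(X,Y)=0$ for all $n,m,R\ge1$ if and only if the systems are disjoint, i.e. $\mathcal J(T,S)=\{\mu\otimes\nu\}$.
   Context: A compact metric measure-preserving system $(X,d_X,\mu,T)$: $(X,d_X)$ compact metric, $\mu$ Borel probability, $T$ Borel with $T_\#\mu=\mu$. $\mathcal J(T,S)$: Borel probability measures on $X\times Y$ with marginals $\mu,\nu$ invariant under $T\times S$. For $z_i=(x_i,y_i)$, $\mathcal D^X_{n,m}=(d_X(T^ax_i,T^bx_j))_{1\le i,j\le n,0\le a,b<m}$, $\widetilde{\mathcal D}^X_{n,m,R}=(\mathcal D^X_{n,m},(d_X(T^ax_i,a_r))_{1\le i\le n,0\le a<m,1\le r\le R})$, and $\widetilde{\mathcal D}^Y_{n,m,R}$ analogously with $d_Y,S,b_r$; $\widetilde\Phi_{n,m,R}(\lambda)=\mathrm{Law}_{\lambda^{\otimes n}}(\widetilde{\mathcal D}^X_{n,m,R},\widetilde{\mathcal D}^Y_{n,m,R})$. $W_p$ is the $p$-Wasserstein distance on probability measures on the finite array cube with a fixed product Euclidean metric, and $\widetilde{\mathrm{Dep}}_{n,m,R,p}(X,Y)=\sup_{\lambda\in\mathcal J(T,S)}W_p(\widetilde\Phi_{n,m,R}(\lambda),\widetilde\Phi_{n,m,R}(\mu\otimes\nu))$.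 *)

theory Defs
  imports "HOL-Probability.Probability"
begin

definition cmmps :: "'a::metric_space measure \<Rightarrow> ('a \<Rightarrow> 'a) \<Rightarrow> bool" where
  "cmmps M T \<longleftrightarrow> compact (UNIV :: 'a set) \<and> prob_space M \<and> sets M = sets borel
     \<and> T \<in> borel_measurable borel \<and> distr M borel T = M"

definition supp :: "'a::topological_space measure \<Rightarrow> 'a set" where
  "supp M = {x. \<forall>U. open U \<and> x \<in> U \<longrightarrow> emeasure M U > 0}"

definition joinings :: "'a::metric_space measure \<Rightarrow> 'b::metric_space measure
    \<Rightarrow> ('a \<Rightarrow> 'a) \<Rightarrow> ('b \<Rightarrow> 'b) \<Rightarrow> ('a \<times> 'b) measure set" where
  "joinings M N T S = {L. prob_space L \<and> sets L = sets (borel \<Otimes>\<^sub>M borel)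
     \<and> distr L borel fst = M \<and> distr L borel snd = N
     \<and> distr L L (map_prod T S) = L}"

datatype aidx = DX nat nat nat nat | AX nat nat nat | DY nat nat nat nat | AY nat nat nat

definition aidx_set :: "nat \<Rightarrow> nat \<Rightarrow> nat \<Rightarrow> aidx set" where
  "aidx_set n m R =
     {DX i j a b | i j a b. i \<in> {1..n} \<and> j \<in> {1..n} \<and> a < m \<and> b < m}
   \<union> {AX i a r | i a r. i \<in> {1..n} \<and> a < m \<and> r \<in> {1..R}}
   \<union> {DY i j a b | i j a b. i \<in> {1..n} \<and> j \<in> {1..n} \<and> a < m \<and> b < m}
   \<union> {AY i a r | i a r. i \<in> {1..n} \<and> a < m \<and> r \<in> {1..R}}"

definition dep_array :: "nat \<Rightarrow> nat \<Rightarrow> nat \<Rightarrow> ('a::metric_space \<Rightarrow> 'a) \<Rightarrow> ('b::metric_space \<Rightarrow> 'b)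
    \<Rightarrow> (nat \<Rightarrow> 'a) \<Rightarrow> (nat \<Rightarrow> 'b) \<Rightarrow> (nat \<Rightarrow> 'a \<times> 'b) \<Rightarrow> aidx \<Rightarrow> real" where
  "dep_array n m R T S as bs z = restrict (\<lambda>k. case k of
       DX i j a b \<Rightarrow> dist ((T ^^ a) (fst (z i))) ((T ^^ b) (fst (z j)))
     | AX i a r \<Rightarrow> dist ((T ^^ a) (fst (z i))) (as r)
     | DY i j a b \<Rightarrow> dist ((S ^^ a) (snd (z i))) ((S ^^ b) (snd (z j)))
     | AY i a r \<Rightarrow> dist ((S ^^ a) (snd (z i))) (bs r)) (aidx_set n m R)"

definition array_law :: "nat \<Rightarrow> nat \<Rightarrow> nat \<Rightarrow> ('a::metric_space \<Rightarrow> 'a) \<Rightarrow> ('b::metric_space \<Rightarrow> 'b)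
    \<Rightarrow> (nat \<Rightarrow> 'a) \<Rightarrow> (nat \<Rightarrow> 'b) \<Rightarrow> ('a \<times> 'b) measure \<Rightarrow> (aidx \<Rightarrow> real) measure" where
  "array_law n m R T S as bs L =
     distr (PiM {1..n} (\<lambda>_. L)) (PiM (aidx_set n m R) (\<lambda>_. borel)) (dep_array n m R T S as bs)"

definition eucl_dist :: "'i set \<Rightarrow> ('i \<Rightarrow> real) \<Rightarrow> ('i \<Rightarrow> real) \<Rightarrow> real" where
  "eucl_dist I u v = sqrt (\<Sum>k\<in>I. (u k - v k)^2)"

definition couplings :: "'i set \<Rightarrow> ('i \<Rightarrow> real) measure \<Rightarrow> ('i \<Rightarrow> real) measure
    \<Rightarrow> (('i \<Rightarrow> real) \<times> ('i \<Rightarrow> real)) measure set" where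
  "couplings I P Q = {C. prob_space C
     \<and> sets C = sets (PiM I (\<lambda>_. borel) \<Otimes>\<^sub>M PiM I (\<lambda>_. borel))
     \<and> distr C (PiM I (\<lambda>_. borel)) fst = P \<and> distr C (PiM I (\<lambda>_. borel)) snd = Q}"

definition wasserstein :: "real \<Rightarrow> 'i set \<Rightarrow> ('i \<Rightarrow> real) measure \<Rightarrow> ('i \<Rightarrow> real) measure \<Rightarrow> real" where
  "wasserstein p I P Q =
     (enn2real (INF C \<in> couplings I P Q.
        \<integral>\<^sup>+ w. ennreal (eucl_dist I (fst w) (snd w) powr p) \<partial>C)) powr (1 / p)"

definition Dep :: "nat \<Rightarrow> nat \<Rightarrow> nat \<Rightarrow> real \<Rightarrow> 'a::metric_space measure \<Rightarrow> 'b::metric_space measure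
    \<Rightarrow> ('a \<Rightarrow> 'a) \<Rightarrow> ('b \<Rightarrow> 'b) \<Rightarrow> (nat \<Rightarrow> 'a) \<Rightarrow> (nat \<Rightarrow> 'b) \<Rightarrow> real" where
  "Dep n m R p M N T S as bs =
     (SUP L \<in> joinings M N T S. wasserstein p (aidx_set n m R)
        (array_law n m R T S as bs L) (array_law n m R T S as bs (M \<Otimes>\<^sub>M N)))"

end

theory Submission
  imports Defs
begin

lemma cmmps_D:
  fixes M :: "'a::metric_space measure"
  assumes "cmmps M T"
  shows "prob_space M" "sets M = sets borel" "space M = UNIV" "compact (UNIV::'a::metric_space set)"
    "T \<in> borel_measurable borel" "distr M borel T = M"
proof -
  show "space M = UNIV" using assms unfolding cmmps_def by (metis sets_eq_imp_space_eq space_borel)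
qed (use assms in \<open>auto simp: cmmps_def\<close>)

lemma dist_bound:
  assumes "compact (UNIV::'a::metric_space set)"
  obtains B where "B \<ge> 0" "\<And>x y::'a. dist x y \<le> B"
proof -
  have "bounded (UNIV::'a set)" using assms compact_imp_bounded by blast
  then obtain e where "\<forall>x::'a. \<forall>y. dist x y \<le> e" unfolding bounded_two_points by auto
  then show ?thesis using that[of "max e 0"] by (meson max.coboundedI1 max.cobounded2)
qed

lemma eucl_dist_meas[measurable]:
  "(\<lambda>w. ennreal (eucl_dist I (fst w) (snd w) powr p)) \<in> borel_measurable (PiM I (\<lambda>_. borel) \<Otimes>\<^sub>M PiM I (\<lambda>_. borel))"
  unfolding eucl_dist_def by measurable

lemma eucl_dist_real_meas[measurable]:
  "(\<lambda>w. eucl_dist I (fst w) (snd w)) \<in> borel_measurable (PiM I (\<lambda>_. borel) \<Otimes>\<^sub>M PiM I (\<lambda>_. borel))"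
  unfolding eucl_dist_def by measurable

lemma wasserstein_self: "wasserstein p I P P = 0"
proof (cases "couplings I P P = {}")
  case True
  then show ?thesis unfolding wasserstein_def by simp
next
  case False
  then obtain C where C: "C \<in> couplings I P P" by blast
  let ?B = "PiM I (\<lambda>_. borel) :: ('a \<Rightarrow> real) measure"
  have Cp: "prob_space C" and Cs: "sets C = sets (?B \<Otimes>\<^sub>M ?B)" and CP: "distr C ?B fst = P"
    using C unfolding couplings_def by auto
  have fm: "fst \<in> measurable C ?B" using Cs by (simp add: measurable_cong_sets[OF Cs refl])
  have Pp: "prob_space P" using prob_space.prob_space_distr[OF Cp fm] CP by simp
  have Ps: "sets P = sets ?B" using CP by (metis sets_distr)
  define D where "D = distr P (?B \<Otimes>\<^sub>M ?B) (\<lambda>x. (x, x))"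
  have dm: "(\<lambda>x. (x, x)) \<in> measurable P (?B \<Otimes>\<^sub>M ?B)"
    by (rule measurable_Pair) (simp_all add: measurable_cong_sets[OF Ps refl])
  have "D \<in> couplings I P P"
  proof -
    have "prob_space D" unfolding D_def using prob_space.prob_space_distr[OF Pp dm] .
    moreover have "distr D ?B fst = P" "distr D ?B snd = P"
      unfolding D_def
      by (subst distr_distr; (simp add: dm)?; simp add: comp_def distr_id2[OF Ps[symmetric]])+
    ultimately show ?thesis unfolding couplings_def D_def by simp
  qed
  moreover have "(\<integral>\<^sup>+ w. ennreal (eucl_dist I (fst w) (snd w) powr p) \<partial>D) = 0"
    unfolding D_def by (subst nn_integral_distr[OF dm]) (simp_all add: eucl_dist_def)
  ultimately have "(INF C \<in> couplings I P P. \<integral>\<^sup>+ w. ennreal (eucl_dist I (fst w) (snd w) powr p) \<partial>C) = 0"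
    by (metis (no_types, lifting) INF_lower bot.extremum_uniqueI bot_ennreal)
  then show ?thesis unfolding wasserstein_def by simp
qed

lemma distr_self_M:
  assumes "cmmps M T" shows "distr M M T = M"
proof -
  have "distr M M T = distr M borel T" by (rule distr_cong) (auto simp: cmmps_D(2)[OF assms])
  also have "\<dots> = M" by (rule cmmps_D(6)[OF assms])
  finally show ?thesis .
qed

lemma T_meas: assumes "cmmps M T" shows "T \<in> measurable M M"
  using cmmps_D(5)[OF assms] measurable_cong_sets[OF cmmps_D(2)[OF assms] cmmps_D(2)[OF assms]] by simp

lemma prod_joining:
  assumes M: "cmmps M T" and N: "cmmps N S"
  shows "M \<Otimes>\<^sub>M N \<in> joinings M N T S"
proof -
  note MD = cmmps_D[OF M] and ND = cmmps_D[OF N]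
  interpret Mp: prob_space M by (rule MD(1))
  interpret Np: prob_space N by (rule ND(1))
  interpret pair_sigma_finite M N ..
  have s: "sets (M \<Otimes>\<^sub>M N) = sets (borel \<Otimes>\<^sub>M borel)"
    by (rule sets_pair_measure_cong) (simp_all add: MD(2) ND(2))
  have f: "distr (M \<Otimes>\<^sub>M N) borel fst = M"
  proof -
    have "distr (M \<Otimes>\<^sub>M N) borel fst = distr (M \<Otimes>\<^sub>M N) M fst" by (rule distr_cong) (simp_all add: MD(2))
    also have "\<dots> = M" by (rule Np.distr_pair_fst)
    finally show ?thesis .
  qed
  have g: "distr (M \<Otimes>\<^sub>M N) borel snd = N"
  proof -
    have "distr (M \<Otimes>\<^sub>M N) borel snd = distr (M \<Otimes>\<^sub>M N) N snd" by (rule distr_cong) (simp_all add: ND(2))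
    also have "\<dots> = distr (distr (M \<Otimes>\<^sub>M N) (N \<Otimes>\<^sub>M M) (\<lambda>(x, y). (y, x))) N fst"
      by (subst distr_distr) (auto simp: comp_def case_prod_beta intro!: distr_cong measurable_Pair)
    also have "distr (M \<Otimes>\<^sub>M N) (N \<Otimes>\<^sub>M M) (\<lambda>(x, y). (y, x)) = N \<Otimes>\<^sub>M M"
      using pair_sigma_finite.distr_pair_swap[of N M] by (metis Mp.sigma_finite_measure_axioms Np.sigma_finite_measure_axioms pair_sigma_finite.intro)
    also have "distr (N \<Otimes>\<^sub>M M) N fst = N" by (rule Mp.distr_pair_fst)
    finally show ?thesis .
  qed
  have h: "distr (M \<Otimes>\<^sub>M N) (M \<Otimes>\<^sub>M N) (map_prod T S) = M \<Otimes>\<^sub>M N"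
  proof -
    have "distr M M T \<Otimes>\<^sub>M distr N N S = distr (M \<Otimes>\<^sub>M N) (M \<Otimes>\<^sub>M N) (\<lambda>(x, y). (T x, S y))"
      by (rule pair_measure_distr) (simp_all add: T_meas[OF M] T_meas[OF N] distr_self_M[OF N] Np.sigma_finite_measure_axioms)
    then show ?thesis by (simp add: distr_self_M[OF M] distr_self_M[OF N] map_prod_def)
  qed
  show ?thesis unfolding joinings_def using s f g h prob_space_pair[OF MD(1) ND(1)] by simp
qed

lemma aidx11: "aidx_set 1 1 R = {DX 1 1 0 0, DY 1 1 0 0} \<union> (\<lambda>r. AX 1 0 r) ` {1..R} \<union> (\<lambda>r. AY 1 0 r) ` {1..R}"
  unfolding aidx_set_def by auto

lemma aidx11_finite: "finite (aidx_set 1 1 R)"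
  unfolding aidx11 by simp

lemma dist_const_meas: "(\<lambda>x::'a::metric_space. dist x c) \<in> borel_measurable borel"
  by (intro borel_measurable_continuous_onI continuous_intros)

lemma fst1_meas:
  assumes "sets K = sets (borel \<Otimes>\<^sub>M borel)"
  shows "(\<lambda>z. fst (z (1::nat))) \<in> measurable (PiM {1..1} (\<lambda>_. K)) borel"
    "(\<lambda>z. snd (z (1::nat))) \<in> measurable (PiM {1..1} (\<lambda>_. K)) borel"
proof -
  have c: "(\<lambda>z. z (1::nat)) \<in> measurable (PiM {1..1} (\<lambda>_. K)) K"
    by (rule measurable_component_singleton) simp
  have "fst \<in> measurable K borel" "snd \<in> measurable K borel"
    using measurable_cong_sets[OF assms refl] by auto
  then show "(\<lambda>z. fst (z (1::nat))) \<in> measurable (PiM {1..1} (\<lambda>_. K)) borel"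
    "(\<lambda>z. snd (z (1::nat))) \<in> measurable (PiM {1..1} (\<lambda>_. K)) borel"
    using measurable_compose[OF c] by auto
qed

lemma dep_array_meas:
  assumes "sets K = sets (borel \<Otimes>\<^sub>M borel)"
  shows "dep_array 1 1 R T S as bs \<in> measurable (PiM {1..1} (\<lambda>_. K)) (PiM (aidx_set 1 1 R) (\<lambda>_. borel))"
proof -
  have "(\<lambda>z. \<lambda>k\<in>aidx_set 1 1 R. (case k of
       DX i j a b \<Rightarrow> dist ((T ^^ a) (fst (z i))) ((T ^^ b) (fst (z j)))
     | AX i a r \<Rightarrow> dist ((T ^^ a) (fst (z i))) (as r)
     | DY i j a b \<Rightarrow> dist ((S ^^ a) (snd (z i))) ((S ^^ b) (snd (z j)))
     | AY i a r \<Rightarrow> dist ((S ^^ a) (snd (z i))) (bs r))) \<in> measurable (PiM {1..1} (\<lambda>_. K)) (PiM (aidx_set 1 1 R) (\<lambda>_. borel))"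
  proof (rule measurable_restrict)
    fix k assume "k \<in> aidx_set 1 1 R"
    then consider "k = DX 1 1 0 0" | "k = DY 1 1 0 0" | r where "k = AX 1 0 r" | r where "k = AY 1 0 r"
      unfolding aidx11 by auto
    then show "(\<lambda>z. case k of
       DX i j a b \<Rightarrow> dist ((T ^^ a) (fst (z i))) ((T ^^ b) (fst (z j)))
     | AX i a r \<Rightarrow> dist ((T ^^ a) (fst (z i))) (as r)
     | DY i j a b \<Rightarrow> dist ((S ^^ a) (snd (z i))) ((S ^^ b) (snd (z j)))
     | AY i a r \<Rightarrow> dist ((S ^^ a) (snd (z i))) (bs r)) \<in> borel_measurable (PiM {1..1} (\<lambda>_. K))"
    proof cases
      case 3
      then show ?thesis using measurable_compose[OF fst1_meas(1)[OF assms] dist_const_meas] by simp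
    next
      case 4
      then show ?thesis using measurable_compose[OF fst1_meas(2)[OF assms] dist_const_meas] by simp
    qed simp_all
  qed
  then show ?thesis unfolding dep_array_def .
qed

definition EXs :: "(nat \<Rightarrow> 'a::metric_space) \<Rightarrow> nat set \<Rightarrow> (nat \<Rightarrow> real) \<Rightarrow> 'a set" where
  "EXs as F c = {x. \<forall>r\<in>F. dist x (as r) < c r}"

definition Au :: "nat \<Rightarrow> nat set \<Rightarrow> nat set \<Rightarrow> (nat \<Rightarrow> real) \<Rightarrow> (nat \<Rightarrow> real) \<Rightarrow> (aidx \<Rightarrow> real) set" where
  "Au R F G c s = {u \<in> space (PiM (aidx_set 1 1 R) (\<lambda>_. borel)).
      (\<forall>r\<in>F. u (AX 1 0 r) < c r) \<and> (\<forall>r\<in>G. u (AY 1 0 r) < s r)}"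

lemma EX_open: "open (EXs as F c)" if "finite F"
proof -
  have "EXs as F c = (\<Inter>r\<in>F. ball (as r) (c r))" unfolding EXs_def by (auto simp: dist_commute)
  then show ?thesis using that by auto
qed

lemma EX_borel: "finite F \<Longrightarrow> EXs as F c \<in> sets borel"
  by (rule borel_open, rule EX_open)

lemma Au_sets:
  assumes "finite F" "finite G" "F \<subseteq> {1..R}" "G \<subseteq> {1..R}"
  shows "Au R F G c s \<in> sets (PiM (aidx_set 1 1 R) (\<lambda>_. borel))"
proof -
  let ?B = "PiM (aidx_set 1 1 R) (\<lambda>_. borel) :: (aidx \<Rightarrow> real) measure"
  have m1: "Measurable.pred ?B (\<lambda>u. u (AX 1 0 r) < c r)" if "r \<in> F" for r
  proof -
    have "AX 1 0 r \<in> aidx_set 1 1 R" using that assms unfolding aidx11 by auto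
    then show ?thesis by measurable
  qed
  have m2: "Measurable.pred ?B (\<lambda>u. u (AY 1 0 r) < s r)" if "r \<in> G" for r
  proof -
    have "AY 1 0 r \<in> aidx_set 1 1 R" using that assms unfolding aidx11 by auto
    then show ?thesis by measurable
  qed
  have "Measurable.pred ?B (\<lambda>u. (\<forall>r\<in>F. u (AX 1 0 r) < c r) \<and> (\<forall>r\<in>G. u (AY 1 0 r) < s r))"
    using m1 m2 assms(1,2) by (intro pred_intros_logic pred_intros_finite) auto
  then show ?thesis unfolding Au_def by (simp add: pred_def) 
qed

lemma distr_pair_snd':
  assumes "prob_space A" "prob_space B"
  shows "distr (A \<Otimes>\<^sub>M B) B snd = B"
proof -
  interpret Ap: prob_space A by fact
  interpret Bp: prob_space B by fact
  have "distr (A \<Otimes>\<^sub>M B) B snd = distr (distr (A \<Otimes>\<^sub>M B) (B \<Otimes>\<^sub>M A) (\<lambda>(x, y). (y, x))) B fst"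
    by (subst distr_distr) (auto simp: comp_def case_prod_beta intro!: distr_cong measurable_Pair)
  also have "distr (A \<Otimes>\<^sub>M B) (B \<Otimes>\<^sub>M A) (\<lambda>(x, y). (y, x)) = B \<Otimes>\<^sub>M A"
    using pair_sigma_finite.distr_pair_swap[of B A] by (metis Ap.sigma_finite_measure_axioms Bp.sigma_finite_measure_axioms pair_sigma_finite.intro)
  also have "distr (B \<Otimes>\<^sub>M A) B fst = B" by (rule Ap.distr_pair_fst)
  finally show ?thesis .
qed

lemma law_rect:
  assumes Kp: "prob_space K" and sK: "sets K = sets (borel \<Otimes>\<^sub>M borel)"
    and F: "finite F" "F \<subseteq> {1..R}" and G: "finite G" "G \<subseteq> {1..R}"
  shows "emeasure (array_law 1 1 R T S as bs K) (Au R F G c s) = emeasure K (EXs as F c \<times> EXs bs G s)"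
proof -
  let ?P = "PiM {1..1} (\<lambda>_. K) :: (nat \<Rightarrow> _) measure"
  let ?f = "dep_array 1 1 R T S as bs"
  have fm: "?f \<in> measurable ?P (PiM (aidx_set 1 1 R) (\<lambda>_. borel))" by (rule dep_array_meas[OF sK])
  have cm: "(\<lambda>z. z (1::nat)) \<in> measurable ?P K" by (rule measurable_component_singleton) simp
  have E: "EXs as F c \<times> EXs bs G s \<in> sets K" unfolding sK
    by (intro pair_measureI EX_borel F G)
  have "?f -` Au R F G c s \<inter> space ?P = (\<lambda>z. z 1) -` (EXs as F c \<times> EXs bs G s) \<inter> space ?P"
  proof -
    have "?f z \<in> space (PiM (aidx_set 1 1 R) (\<lambda>_. borel))" if "z \<in> space ?P" for z
      using measurable_space[OF fm that] .
    moreover have "AX 1 0 r \<in> aidx_set 1 1 R" if "r \<in> F" for r using that F unfolding aidx11 by auto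
    moreover have "AY 1 0 r \<in> aidx_set 1 1 R" if "r \<in> G" for r using that G unfolding aidx11 by auto
    ultimately show ?thesis
      unfolding Au_def EXs_def dep_array_def by (auto simp: dist_commute mem_Times_iff)
  qed
  then have "emeasure (array_law 1 1 R T S as bs K) (Au R F G c s) = emeasure ?P ((\<lambda>z. z 1) -` (EXs as F c \<times> EXs bs G s) \<inter> space ?P)"
    unfolding array_law_def by (simp only: emeasure_distr[OF fm Au_sets[OF F(1) G(1) F(2) G(2)]])
  also have "\<dots> = emeasure (distr ?P K (\<lambda>z. z 1)) (EXs as F c \<times> EXs bs G s)"
    by (simp only: emeasure_distr[OF cm E])
  also have "distr ?P K (\<lambda>z. z 1) = K"
    by (rule distr_PiM_component) (simp_all add: Kp)
  finally show ?thesis .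
qed

lemma dep_array_bound:
  assumes "\<And>x y::'a::metric_space. dist x y \<le> B" "\<And>x y::'b::metric_space. dist x y \<le> B"
    and "k \<in> aidx_set n m R"
  shows "0 \<le> dep_array n m R T S (as :: nat \<Rightarrow> 'a) (bs :: nat \<Rightarrow> 'b) z k \<and> dep_array n m R T S as bs z k \<le> B"
  using assms unfolding dep_array_def by (cases k) auto

lemma bounded_coupling:
  fixes T :: "'a::metric_space \<Rightarrow> 'a" and S :: "'b::metric_space \<Rightarrow> 'b"
  assumes K1: "prob_space K1" "sets K1 = sets (borel \<Otimes>\<^sub>M borel)"
    and K2: "prob_space K2" "sets K2 = sets (borel \<Otimes>\<^sub>M borel)"
    and B: "\<And>x y::'a. dist x y \<le> B" "\<And>x y::'b. dist x y \<le> B" "0 \<le> B"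
    and p: "p > 0"
  shows "\<exists>C \<in> couplings (aidx_set 1 1 R) (array_law 1 1 R T S as bs K1) (array_law 1 1 R T S as bs K2).
     (\<integral>\<^sup>+ w. ennreal (eucl_dist (aidx_set 1 1 R) (fst w) (snd w) powr p) \<partial>C)
       \<le> ennreal (sqrt (real (card (aidx_set 1 1 R)) * B\<^sup>2) powr p)"
proof -
  let ?I = "aidx_set 1 1 R"
  let ?B = "PiM ?I (\<lambda>_. borel) :: (aidx \<Rightarrow> real) measure"
  let ?P1 = "PiM {1..1} (\<lambda>_. K1) :: (nat \<Rightarrow> _) measure"
  let ?P2 = "PiM {1..1} (\<lambda>_. K2) :: (nat \<Rightarrow> _) measure"
  let ?f = "dep_array 1 1 R T S as bs"
  let ?c = "sqrt (real (card ?I) * B\<^sup>2) powr p"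
  have f1: "?f \<in> measurable ?P1 ?B" by (rule dep_array_meas[OF K1(2)])
  have f2: "?f \<in> measurable ?P2 ?B" by (rule dep_array_meas[OF K2(2)])
  have p1: "prob_space ?P1" by (rule prob_space_PiM) (simp add: K1)
  have p2: "prob_space ?P2" by (rule prob_space_PiM) (simp add: K2)
  have p12: "prob_space (?P1 \<Otimes>\<^sub>M ?P2)" by (rule prob_space_pair[OF p1 p2])
  have gm: "(\<lambda>(x, y). (?f x, ?f y)) \<in> measurable (?P1 \<Otimes>\<^sub>M ?P2) (?B \<Otimes>\<^sub>M ?B)"
    using f1 f2 by measurable
  define C where "C = distr (?P1 \<Otimes>\<^sub>M ?P2) (?B \<Otimes>\<^sub>M ?B) (\<lambda>(x, y). (?f x, ?f y))"
  have "C \<in> couplings ?I (array_law 1 1 R T S as bs K1) (array_law 1 1 R T S as bs K2)"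
  proof -
    have "prob_space C" unfolding C_def by (rule prob_space.prob_space_distr[OF p12 gm])
    moreover have "distr C ?B fst = array_law 1 1 R T S as bs K1"
    proof -
      have "distr C ?B fst = distr (?P1 \<Otimes>\<^sub>M ?P2) ?B (?f \<circ> fst)"
        unfolding C_def by (subst distr_distr[OF _ gm]) (simp_all add: comp_def case_prod_beta)
      also have "\<dots> = distr (distr (?P1 \<Otimes>\<^sub>M ?P2) ?P1 fst) ?B ?f"
        by (subst distr_distr[OF f1]) simp_all
      also have "distr (?P1 \<Otimes>\<^sub>M ?P2) ?P1 fst = ?P1" by (rule prob_space.distr_pair_fst[OF p2])
      finally show ?thesis unfolding array_law_def by simp
    qed
    moreover have "distr C ?B snd = array_law 1 1 R T S as bs K2"
    proof -
      have "distr C ?B snd = distr (?P1 \<Otimes>\<^sub>M ?P2) ?B (?f \<circ> snd)"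
        unfolding C_def by (subst distr_distr[OF _ gm]) (simp_all add: comp_def case_prod_beta)
      also have "\<dots> = distr (distr (?P1 \<Otimes>\<^sub>M ?P2) ?P2 snd) ?B ?f"
        by (subst distr_distr[OF f2]) simp_all
      also have "distr (?P1 \<Otimes>\<^sub>M ?P2) ?P2 snd = ?P2" by (rule distr_pair_snd'[OF p1 p2])
      finally show ?thesis unfolding array_law_def by simp
    qed
    ultimately show ?thesis unfolding couplings_def C_def by simp
  qed
  moreover have "(\<integral>\<^sup>+ w. ennreal (eucl_dist ?I (fst w) (snd w) powr p) \<partial>C) \<le> ennreal ?c"
  proof -
    have "(\<integral>\<^sup>+ w. ennreal (eucl_dist ?I (fst w) (snd w) powr p) \<partial>C)
        = (\<integral>\<^sup>+ w. ennreal (eucl_dist ?I (?f (fst w)) (?f (snd w)) powr p) \<partial>(?P1 \<Otimes>\<^sub>M ?P2))"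
      unfolding C_def by (subst nn_integral_distr[OF gm]) (simp_all add: case_prod_beta)
    also have "\<dots> \<le> (\<integral>\<^sup>+ w. ennreal ?c \<partial>(?P1 \<Otimes>\<^sub>M ?P2))"
    proof (rule nn_integral_mono)
      fix w
      have "(\<Sum>k\<in>?I. (?f (fst w) k - ?f (snd w) k)\<^sup>2) \<le> (\<Sum>k\<in>?I. B\<^sup>2)"
      proof (rule sum_mono)
        fix k assume k: "k \<in> ?I"
        have "\<bar>?f (fst w) k - ?f (snd w) k\<bar> \<le> \<bar>B\<bar>"
          using dep_array_bound[OF B(1,2) k, of T S as bs "fst w"] dep_array_bound[OF B(1,2) k, of T S as bs "snd w"] B(3)
          by linarith
        then show "(?f (fst w) k - ?f (snd w) k)\<^sup>2 \<le> B\<^sup>2" by (simp add: abs_le_square_iff)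
      qed
      then have "eucl_dist ?I (?f (fst w)) (?f (snd w)) \<le> sqrt (real (card ?I) * B\<^sup>2)"
        unfolding eucl_dist_def by simp
      then have "eucl_dist ?I (?f (fst w)) (?f (snd w)) powr p \<le> ?c"
        by (intro powr_mono2) (use p in \<open>auto simp: eucl_dist_def intro: sum_nonneg\<close>)
      then show "ennreal (eucl_dist ?I (?f (fst w)) (?f (snd w)) powr p) \<le> ennreal ?c"
        by (rule ennreal_leI)
    qed
    also have "\<dots> = ennreal ?c" using prob_space.emeasure_space_1[OF p12] by simp
    finally show ?thesis .
  qed
  ultimately show ?thesis by blast
qed

lemma eucl_dist_sym: "eucl_dist I u v = eucl_dist I v u"
  unfolding eucl_dist_def by (simp add: power2_commute)

lemma comp_le_eucl:
  assumes "finite I" "k \<in> I"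
  shows "\<bar>u k - v k\<bar> \<le> eucl_dist I u v"
proof -
  have "(u k - v k)\<^sup>2 \<le> (\<Sum>j\<in>I. (u j - v j)\<^sup>2)"
    by (rule member_le_sum) (use assms in auto)
  then have "sqrt ((u k - v k)\<^sup>2) \<le> sqrt (\<Sum>j\<in>I. (u j - v j)\<^sup>2)" by (rule real_sqrt_le_mono)
  then show ?thesis unfolding eucl_dist_def by simp
qed

lemma coupling_ineq:
  fixes C :: "(('i \<Rightarrow> real) \<times> ('i \<Rightarrow> real)) measure"
  assumes sC: "sets C = sets (PiM I (\<lambda>_. borel) \<Otimes>\<^sub>M PiM I (\<lambda>_. borel))"
    and d: "\<delta> > 0" and p: "p > 0"
    and A: "A \<in> sets (PiM I (\<lambda>_. borel))" "A' \<in> sets (PiM I (\<lambda>_. borel))"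
    and g: "(g1 = fst \<and> g2 = snd) \<or> (g1 = snd \<and> g2 = fst)"
    and cond: "\<And>u v. u \<in> A \<Longrightarrow> v \<in> space (PiM I (\<lambda>_. borel)) \<Longrightarrow> eucl_dist I u v < \<delta> \<Longrightarrow> v \<in> A'"
  shows "emeasure C (g1 -` A \<inter> space C) \<le> emeasure C (g2 -` A' \<inter> space C)
     + ennreal (1 / \<delta> powr p) * (\<integral>\<^sup>+ w. ennreal (eucl_dist I (fst w) (snd w) powr p) \<partial>C)"
proof -
  let ?B = "PiM I (\<lambda>_. borel) :: ('i \<Rightarrow> real) measure"
  have spC: "space C = space ?B \<times> space ?B"
    using sets_eq_imp_space_eq[OF sC] by (simp add: space_pair_measure)
  have mC: "measurable C = measurable (?B \<Otimes>\<^sub>M ?B)" by (rule ext, rule measurable_cong_sets[OF sC refl])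
  have g1m: "g1 \<in> measurable C ?B" and g2m: "g2 \<in> measurable C ?B" using g unfolding mC by auto
  define D where "D = {w \<in> space C. \<delta> \<le> eucl_dist I (fst w) (snd w)}"
  have em: "(\<lambda>w. eucl_dist I (fst w) (snd w)) \<in> borel_measurable C" unfolding mC by simp
  have emp: "(\<lambda>w. ennreal (eucl_dist I (fst w) (snd w) powr p)) \<in> borel_measurable C" unfolding mC by simp
  have Ds: "D \<in> sets C" unfolding D_def using em by measurable
  have X: "g2 -` A' \<inter> space C \<in> sets C" using g2m A(2) by measurable
  have sub: "g1 -` A \<inter> space C \<subseteq> (g2 -` A' \<inter> space C) \<union> D"
  proof
    fix w assume w: "w \<in> g1 -` A \<inter> space C"
    have sp: "g2 w \<in> space ?B" using w measurable_space[OF g2m] by auto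
    have "eucl_dist I (g1 w) (g2 w) = eucl_dist I (fst w) (snd w)"
      using g eucl_dist_sym by auto
    then show "w \<in> (g2 -` A' \<inter> space C) \<union> D"
      using cond[of "g1 w" "g2 w"] w sp unfolding D_def by force
  qed
  have "emeasure C (g1 -` A \<inter> space C) \<le> emeasure C ((g2 -` A' \<inter> space C) \<union> D)"
    by (rule emeasure_mono[OF sub]) (use X Ds in auto)
  also have "\<dots> \<le> emeasure C (g2 -` A' \<inter> space C) + emeasure C D"
    by (rule emeasure_subadditive[OF X Ds])
  also have "emeasure C D \<le> ennreal (1 / \<delta> powr p) * (\<integral>\<^sup>+ w. ennreal (eucl_dist I (fst w) (snd w) powr p) \<partial>C)"
  proof -
    have "emeasure C D = (\<integral>\<^sup>+ w. indicator D w \<partial>C)" by (rule nn_integral_indicator[symmetric, OF Ds])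
    also have "\<dots> \<le> (\<integral>\<^sup>+ w. ennreal (1 / \<delta> powr p) * ennreal (eucl_dist I (fst w) (snd w) powr p) \<partial>C)"
    proof (rule nn_integral_mono)
      fix w
      show "indicator D w \<le> ennreal (1 / \<delta> powr p) * ennreal (eucl_dist I (fst w) (snd w) powr p)"
      proof (cases "w \<in> D")
        case True
        then have "\<delta> \<le> eucl_dist I (fst w) (snd w)" unfolding D_def by auto
        then have "\<delta> powr p \<le> eucl_dist I (fst w) (snd w) powr p" using d p by (intro powr_mono2) auto
        moreover have "\<delta> powr p > 0" using d by simp
        ultimately have "1 \<le> (1 / \<delta> powr p) * eucl_dist I (fst w) (snd w) powr p"
          by (simp add: field_simps)
        note le1 = this
        have "indicator D w = (1::ennreal)" using True by simp
        also have "(1::ennreal) = ennreal 1" by simp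
        also have "\<dots> \<le> ennreal ((1 / \<delta> powr p) * eucl_dist I (fst w) (snd w) powr p)"
          by (rule ennreal_leI[OF le1])
        also have "\<dots> = ennreal (1 / \<delta> powr p) * ennreal (eucl_dist I (fst w) (snd w) powr p)"
          by (rule ennreal_mult) auto
        finally show ?thesis .
      qed simp
    qed
    also have "\<dots> = ennreal (1 / \<delta> powr p) * (\<integral>\<^sup>+ w. ennreal (eucl_dist I (fst w) (snd w) powr p) \<partial>C)"
      by (rule nn_integral_cmult[OF emp])
    finally show ?thesis .
  qed
  finally show ?thesis by (simp add: add_left_mono)
qed

lemma approx_dir:
  fixes T :: "'a::metric_space \<Rightarrow> 'a" and S :: "'b::metric_space \<Rightarrow> 'b"
  assumes Ka: "prob_space Ka" "sets Ka = sets (borel \<Otimes>\<^sub>M borel)"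
    and Kb: "prob_space Kb" "sets Kb = sets (borel \<Otimes>\<^sub>M borel)"
    and F: "finite F" "F \<subseteq> {1..R}" and G: "finite G" "G \<subseteq> {1..R}"
    and p: "p > 0" and d: "\<delta> > 0"
    and g: "(g1 = fst \<and> g2 = snd) \<or> (g1 = snd \<and> g2 = fst)"
    and small: "\<And>\<epsilon>. \<epsilon> > 0 \<Longrightarrow> \<exists>C. sets C = sets (PiM (aidx_set 1 1 R) (\<lambda>_. borel) \<Otimes>\<^sub>M PiM (aidx_set 1 1 R) (\<lambda>_. borel))
        \<and> distr C (PiM (aidx_set 1 1 R) (\<lambda>_. borel)) g1 = array_law 1 1 R T S as bs Ka
        \<and> distr C (PiM (aidx_set 1 1 R) (\<lambda>_. borel)) g2 = array_law 1 1 R T S as bs Kb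
        \<and> (\<integral>\<^sup>+ w. ennreal (eucl_dist (aidx_set 1 1 R) (fst w) (snd w) powr p) \<partial>C) < ennreal \<epsilon>"
  shows "emeasure Ka (EXs as F (\<lambda>r. c r - \<delta>) \<times> EXs bs G (\<lambda>r. s r - \<delta>))
       \<le> emeasure Kb (EXs as F c \<times> EXs bs G s)"
proof (rule ennreal_le_epsilon)
  fix e :: real assume e: "0 < e"
  let ?I = "aidx_set 1 1 R"
  let ?B = "PiM ?I (\<lambda>_. borel) :: (aidx \<Rightarrow> real) measure"
  let ?A = "Au R F G (\<lambda>r. c r - \<delta>) (\<lambda>r. s r - \<delta>)"
  let ?A' = "Au R F G c s"
  have dp: "\<delta> powr p > 0" using d by simp
  obtain C where sC: "sets C = sets (?B \<Otimes>\<^sub>M ?B)" and C1: "distr C ?B g1 = array_law 1 1 R T S as bs Ka"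
    and C2: "distr C ?B g2 = array_law 1 1 R T S as bs Kb"
    and Ci: "(\<integral>\<^sup>+ w. ennreal (eucl_dist ?I (fst w) (snd w) powr p) \<partial>C) < ennreal (e * \<delta> powr p)"
    using small[of "e * \<delta> powr p"] e dp by auto
  have mC: "measurable C = measurable (?B \<Otimes>\<^sub>M ?B)" by (rule ext, rule measurable_cong_sets[OF sC refl])
  have g1m: "g1 \<in> measurable C ?B" and g2m: "g2 \<in> measurable C ?B" using g unfolding mC by auto
  have As: "?A \<in> sets ?B" "?A' \<in> sets ?B" using Au_sets[OF F(1) G(1) F(2) G(2)] by auto
  have cond: "v \<in> ?A'" if u: "u \<in> ?A" and v: "v \<in> space ?B" and uv: "eucl_dist ?I u v < \<delta>" for u v
  proof -
    have "\<bar>u k - v k\<bar> < \<delta>" if "k \<in> ?I" for k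
      using comp_le_eucl[OF aidx11_finite that, of u v] uv by linarith
    moreover have "AX 1 0 r \<in> ?I" if "r \<in> F" for r using that F unfolding aidx11 by auto
    moreover have "AY 1 0 r \<in> ?I" if "r \<in> G" for r using that G unfolding aidx11 by auto
    ultimately show ?thesis using u v unfolding Au_def by (force simp: abs_less_iff)
  qed
  have "emeasure Ka (EXs as F (\<lambda>r. c r - \<delta>) \<times> EXs bs G (\<lambda>r. s r - \<delta>)) = emeasure (array_law 1 1 R T S as bs Ka) ?A"
    by (rule law_rect[symmetric, OF Ka F G])
  also have "\<dots> = emeasure C (g1 -` ?A \<inter> space C)"
    unfolding C1[symmetric] by (rule emeasure_distr[OF g1m As(1)])
  also have "\<dots> \<le> emeasure C (g2 -` ?A' \<inter> space C)
     + ennreal (1 / \<delta> powr p) * (\<integral>\<^sup>+ w. ennreal (eucl_dist ?I (fst w) (snd w) powr p) \<partial>C)"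
    by (rule coupling_ineq[OF sC d p As g cond])
  also have "emeasure C (g2 -` ?A' \<inter> space C) = emeasure Kb (EXs as F c \<times> EXs bs G s)"
  proof -
    have "emeasure C (g2 -` ?A' \<inter> space C) = emeasure (distr C ?B g2) ?A'"
      by (rule emeasure_distr[symmetric, OF g2m As(2)])
    also have "\<dots> = emeasure Kb (EXs as F c \<times> EXs bs G s)" unfolding C2 by (rule law_rect[OF Kb F G])
    finally show ?thesis .
  qed
  also have "ennreal (1 / \<delta> powr p) * (\<integral>\<^sup>+ w. ennreal (eucl_dist ?I (fst w) (snd w) powr p) \<partial>C)
      \<le> ennreal (1 / \<delta> powr p) * ennreal (e * \<delta> powr p)"
    using Ci by (intro mult_left_mono) auto
  also have "ennreal (1 / \<delta> powr p) * ennreal (e * \<delta> powr p) = ennreal e"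
    using dp e by (simp add: ennreal_mult[symmetric])
  finally show "emeasure Ka (EXs as F (\<lambda>r. c r - \<delta>) \<times> EXs bs G (\<lambda>r. s r - \<delta>))
       \<le> emeasure Kb (EXs as F c \<times> EXs bs G s) + ennreal e"
    by (simp add: add_left_mono)
qed

lemma EXs_eventually:
  assumes "finite F" "x \<in> EXs as F c"
  shows "eventually (\<lambda>n. x \<in> EXs as F (\<lambda>r. c r - inverse (real (Suc n)))) sequentially"
proof -
  have "\<forall>r\<in>F. eventually (\<lambda>n. dist x (as r) < c r - inverse (real (Suc n))) sequentially"
  proof
    fix r assume "r \<in> F"
    then have "0 < c r - dist x (as r)" using assms(2) unfolding EXs_def by auto
    from order_tendstoD(2)[OF LIMSEQ_inverse_real_of_nat this]
    show "eventually (\<lambda>n. dist x (as r) < c r - inverse (real (Suc n))) sequentially"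
      by (rule eventually_mono) linarith
  qed
  then show ?thesis unfolding EXs_def using eventually_ball_finite[OF assms(1)] by auto
qed

lemma EXs_mono: "(\<And>r. r \<in> F \<Longrightarrow> c r \<le> c' r) \<Longrightarrow> EXs as F c \<subseteq> EXs as F c'"
  unfolding EXs_def by force

lemma rect_limit:
  fixes as :: "nat \<Rightarrow> 'a::metric_space" and bs :: "nat \<Rightarrow> 'b::metric_space"
  assumes Ka: "sets Ka = sets (borel \<Otimes>\<^sub>M borel)"
    and F: "finite F" and G: "finite G"
    and le: "\<And>\<delta>. \<delta> > 0 \<Longrightarrow> emeasure Ka (EXs as F (\<lambda>r. c r - \<delta>) \<times> EXs bs G (\<lambda>r. s r - \<delta>)) \<le> y"
  shows "emeasure Ka (EXs as F c \<times> EXs bs G s) \<le> y"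
proof -
  define A where "A n = EXs as F (\<lambda>r. c r - inverse (real (Suc n))) \<times> EXs bs G (\<lambda>r. s r - inverse (real (Suc n)))" for n
  have rA: "range A \<subseteq> sets Ka" unfolding A_def Ka by (auto intro!: pair_measureI EX_borel F G)
  have iA: "incseq A"
  proof (rule incseq_SucI)
    fix n
    have "inverse (real (Suc (Suc n))) \<le> inverse (real (Suc n))" by (simp add: field_simps)
    then show "A n \<subseteq> A (Suc n)" unfolding A_def
      by (intro Sigma_mono EXs_mono) auto
  qed
  have uA: "(\<Union>n. A n) = EXs as F c \<times> EXs bs G s"
  proof
    show "(\<Union>n. A n) \<subseteq> EXs as F c \<times> EXs bs G s"
      unfolding A_def by (intro UN_least Sigma_mono EXs_mono) auto
  next
    show "EXs as F c \<times> EXs bs G s \<subseteq> (\<Union>n. A n)"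
    proof
      fix w assume "w \<in> EXs as F c \<times> EXs bs G s"
      then have w1: "fst w \<in> EXs as F c" and w2: "snd w \<in> EXs bs G s" by (auto simp: mem_Times_iff)
      have "eventually (\<lambda>n. w \<in> A n) sequentially"
        using eventually_conj[OF EXs_eventually[OF F w1] EXs_eventually[OF G w2]]
        unfolding A_def by (simp add: mem_Times_iff)
      then obtain N where "\<forall>n\<ge>N. w \<in> A n" unfolding eventually_sequentially by blast
      then show "w \<in> (\<Union>n. A n)" by blast
    qed
  qed
  have "emeasure Ka (EXs as F c \<times> EXs bs G s) = (SUP n. emeasure Ka (A n))"
    unfolding uA[symmetric] by (rule SUP_emeasure_incseq[OF rA iA, symmetric])
  also have "\<dots> \<le> y" unfolding A_def by (intro SUP_least le) simp
  finally show ?thesis .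
qed

lemma W_zero_small:
  assumes W: "wasserstein p I P Q = 0" and p: "p > 0"
    and C0: "C0 \<in> couplings I P Q" "(\<integral>\<^sup>+ w. ennreal (eucl_dist I (fst w) (snd w) powr p) \<partial>C0) \<le> ennreal K0"
    and e: "\<epsilon> > 0"
  shows "\<exists>C\<in>couplings I P Q. (\<integral>\<^sup>+ w. ennreal (eucl_dist I (fst w) (snd w) powr p) \<partial>C) < ennreal \<epsilon>"
proof -
  let ?INF = "INF C \<in> couplings I P Q. \<integral>\<^sup>+ w. ennreal (eucl_dist I (fst w) (snd w) powr p) \<partial>C"
  have "?INF \<le> ennreal K0" using C0 by (meson INF_lower order_trans)
  then have nt: "?INF \<noteq> top" by (metis ennreal_neq_top neq_top_trans)
  have "enn2real ?INF = 0" using W unfolding wasserstein_def by simp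
  then have "?INF = 0" using nt enn2real_eq_0_iff[of ?INF] by blast
  then have "?INF < ennreal \<epsilon>" using e by simp
  then show ?thesis by (simp add: INF_less_iff)
qed

lemma agree_on_rects:
  fixes T :: "'a::metric_space \<Rightarrow> 'a" and S :: "'b::metric_space \<Rightarrow> 'b"
    and as :: "nat \<Rightarrow> 'a" and bs :: "nat \<Rightarrow> 'b"
  assumes K1: "prob_space K1" "sets K1 = sets (borel \<Otimes>\<^sub>M borel)"
    and K2: "prob_space K2" "sets K2 = sets (borel \<Otimes>\<^sub>M borel)"
    and B: "\<And>x y::'a. dist x y \<le> B" "\<And>x y::'b. dist x y \<le> B" "0 \<le> B"
    and p: "p > 0"
    and W: "\<And>R. R \<ge> 1 \<Longrightarrow> wasserstein p (aidx_set 1 1 R) (array_law 1 1 R T S as bs K1) (array_law 1 1 R T S as bs K2) = 0"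
    and F: "finite F" "F \<subseteq> {1..}" and G: "finite G" "G \<subseteq> {1..}"
  shows "emeasure K1 (EXs as F c \<times> EXs bs G s) = emeasure K2 (EXs as F c \<times> EXs bs G s)"
proof -
  define R where "R = Max (insert 1 (F \<union> G))"
  have fin: "finite (insert 1 (F \<union> G))" using F G by simp
  have R1: "R \<ge> 1" unfolding R_def using Max_ge[OF fin] by auto
  have FR: "F \<subseteq> {1..R}" using F Max_ge[OF fin] unfolding R_def by auto
  have GR: "G \<subseteq> {1..R}" using G Max_ge[OF fin] unfolding R_def by auto
  let ?I = "aidx_set 1 1 R"
  let ?B = "PiM ?I (\<lambda>_. borel) :: (aidx \<Rightarrow> real) measure"
  obtain C0 where C0: "C0 \<in> couplings ?I (array_law 1 1 R T S as bs K1) (array_law 1 1 R T S as bs K2)"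
    "(\<integral>\<^sup>+ w. ennreal (eucl_dist ?I (fst w) (snd w) powr p) \<partial>C0) \<le> ennreal (sqrt (real (card ?I) * B\<^sup>2) powr p)"
    using bounded_coupling[OF K1 K2 B p, of R T S as bs] by blast
  note small = W_zero_small[OF W[OF R1] p C0]
  have d1: "emeasure K1 (EXs as F (\<lambda>r. c r - \<delta>) \<times> EXs bs G (\<lambda>r. s r - \<delta>)) \<le> emeasure K2 (EXs as F c \<times> EXs bs G s)"
    if "\<delta> > 0" for \<delta>
  proof (rule approx_dir[OF K1 K2 F(1) FR G(1) GR p that, of fst snd])
    fix \<epsilon> :: real assume "\<epsilon> > 0"
    then obtain C where "C \<in> couplings ?I (array_law 1 1 R T S as bs K1) (array_law 1 1 R T S as bs K2)"
      "(\<integral>\<^sup>+ w. ennreal (eucl_dist ?I (fst w) (snd w) powr p) \<partial>C) < ennreal \<epsilon>" using small by blast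
    then show "\<exists>C. sets C = sets (?B \<Otimes>\<^sub>M ?B) \<and> distr C ?B fst = array_law 1 1 R T S as bs K1
        \<and> distr C ?B snd = array_law 1 1 R T S as bs K2
        \<and> (\<integral>\<^sup>+ w. ennreal (eucl_dist ?I (fst w) (snd w) powr p) \<partial>C) < ennreal \<epsilon>"
      unfolding couplings_def by blast
  qed simp
  have d2: "emeasure K2 (EXs as F (\<lambda>r. c r - \<delta>) \<times> EXs bs G (\<lambda>r. s r - \<delta>)) \<le> emeasure K1 (EXs as F c \<times> EXs bs G s)"
    if "\<delta> > 0" for \<delta>
  proof (rule approx_dir[OF K2 K1 F(1) FR G(1) GR p that, of snd fst])
    fix \<epsilon> :: real assume "\<epsilon> > 0"
    then obtain C where "C \<in> couplings ?I (array_law 1 1 R T S as bs K1) (array_law 1 1 R T S as bs K2)"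
      "(\<integral>\<^sup>+ w. ennreal (eucl_dist ?I (fst w) (snd w) powr p) \<partial>C) < ennreal \<epsilon>" using small by blast
    then show "\<exists>C. sets C = sets (?B \<Otimes>\<^sub>M ?B) \<and> distr C ?B snd = array_law 1 1 R T S as bs K2
        \<and> distr C ?B fst = array_law 1 1 R T S as bs K1
        \<and> (\<integral>\<^sup>+ w. ennreal (eucl_dist ?I (fst w) (snd w) powr p) \<partial>C) < ennreal \<epsilon>"
      unfolding couplings_def by blast
  qed simp
  have "emeasure K1 (EXs as F c \<times> EXs bs G s) \<le> emeasure K2 (EXs as F c \<times> EXs bs G s)"
    by (rule rect_limit[OF K1(2) F(1) G(1)]) (rule d1)
  moreover have "emeasure K2 (EXs as F c \<times> EXs bs G s) \<le> emeasure K1 (EXs as F c \<times> EXs bs G s)"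
    by (rule rect_limit[OF K2(2) F(1) G(1)]) (rule d2)
  ultimately show ?thesis by (rule antisym)
qed

definition GX :: "(nat \<Rightarrow> 'a::metric_space) \<Rightarrow> 'a set set" where
  "GX as = {EXs as F c | F c. finite F \<and> F \<subseteq> {1..}}"

definition GP :: "(nat \<Rightarrow> 'a::metric_space) \<Rightarrow> (nat \<Rightarrow> 'b::metric_space) \<Rightarrow> ('a \<times> 'b) set set" where
  "GP as bs = {A \<times> B | A B. A \<in> GX as \<and> B \<in> GX bs}"

lemma GX_Int: "A \<in> GX as \<Longrightarrow> A' \<in> GX as \<Longrightarrow> A \<inter> A' \<in> GX as"
proof -
  assume "A \<in> GX as" "A' \<in> GX as"
  then obtain F c F' c' where A: "A = EXs as F c" "finite F" "F \<subseteq> {1..}"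
    and A': "A' = EXs as F' c'" "finite F'" "F' \<subseteq> {1..}" unfolding GX_def by auto
  define c'' where "c'' r = (if r \<in> F \<and> r \<in> F' then min (c r) (c' r) else if r \<in> F then c r else c' r)" for r
  have "A \<inter> A' = EXs as (F \<union> F') c''" unfolding A A' EXs_def c''_def by auto
  then show ?thesis unfolding GX_def using A A' by blast
qed

lemma UNIV_GX: "UNIV \<in> GX as"
proof -
  have "UNIV = EXs as {} (\<lambda>_. 0)" unfolding EXs_def by simp
  then show ?thesis unfolding GX_def by blast
qed

lemma GX_borel: "GX as \<subseteq> sets borel"
  unfolding GX_def using EX_borel by blast

lemma GP_Int_stable: "Int_stable (GP as bs)"
  unfolding Int_stable_def GP_def
  by (auto simp: Times_Int_Times) (blast intro: GX_Int)

lemma GP_sets: "GP as bs \<subseteq> sets (borel \<Otimes>\<^sub>M borel)"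
proof (unfold GP_def, clarify)
  fix A B assume "A \<in> GX as" "B \<in> GX bs"
  then show "A \<times> B \<in> sets (borel \<Otimes>\<^sub>M borel)" using GX_borel[of as] GX_borel[of bs] by (intro pair_measureI) blast+
qed

lemma sigma_GP_sets:
  assumes "sets K = sets (borel \<Otimes>\<^sub>M borel)"
  shows "sigma_sets UNIV (GP as bs) \<subseteq> sets K"
proof -
  have "space K = UNIV" using sets_eq_imp_space_eq[OF assms] by (simp add: space_pair_measure)
  then show ?thesis using sets.sigma_sets_subset[of "GP as bs" K] GP_sets assms by auto
qed

lemma sigma_GX_sets: "sigma_sets UNIV (GX as) \<subseteq> sets borel"
  using sets.sigma_sets_subset[of "GX as" borel] GX_borel by auto

lemma agree_sigma:
  assumes K1: "prob_space K1" "sets K1 = sets (borel \<Otimes>\<^sub>M borel)"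
    and K2: "prob_space K2" "sets K2 = sets (borel \<Otimes>\<^sub>M borel)"
    and eq: "\<And>X. X \<in> GP as bs \<Longrightarrow> emeasure K1 X = emeasure K2 X"
    and X: "X \<in> sigma_sets UNIV (GP as bs)"
  shows "emeasure K1 X = emeasure K2 X"
proof -
  have pw: "GP as bs \<subseteq> Pow UNIV" by simp
  interpret K1p: prob_space K1 by (rule K1(1))
  interpret K2p: prob_space K2 by (rule K2(1))
  show ?thesis
  using GP_Int_stable pw X
proof (induction rule: sigma_sets_induct_disjoint)
  case (basic A) then show ?case by (rule eq)
next
  case empty then show ?case by simp
next
  case (compl A)
  have sp1: "space K1 = UNIV" using sets_eq_imp_space_eq[OF K1(2)] by (simp add: space_pair_measure)
  have sp2: "space K2 = UNIV" using sets_eq_imp_space_eq[OF K2(2)] by (simp add: space_pair_measure)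
  have A1: "A \<in> sets K1" and A2: "A \<in> sets K2" using compl(1) sigma_GP_sets K1(2) K2(2) by blast+
  have "emeasure K1 (UNIV - A) = emeasure K1 (space K1) - emeasure K1 A"
    using emeasure_compl[OF A1] K1p.emeasure_finite sp1 by simp
  also have "\<dots> = emeasure K2 (space K2) - emeasure K2 A"
    using compl(2) prob_space.emeasure_space_1[OF K1(1)] prob_space.emeasure_space_1[OF K2(1)] by simp
  also have "\<dots> = emeasure K2 (UNIV - A)"
    using emeasure_compl[OF A2] K2p.emeasure_finite sp2 by simp
  finally show ?case .
next
  case (union A)
  have r1: "range A \<subseteq> sets K1" and r2: "range A \<subseteq> sets K2" using union(2) sigma_GP_sets K1(2) K2(2) by blast+
  show ?case
    using suminf_emeasure[OF r1 union(1)] suminf_emeasure[OF r2 union(1)] union(3) by simp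
qed
qed

lemma rect_sigma:
  assumes A: "A \<in> sigma_sets UNIV (GX as)" and B: "B \<in> sigma_sets UNIV (GX bs)"
  shows "A \<times> B \<in> sigma_sets UNIV (GP as bs)"
proof -
  interpret sa: sigma_algebra UNIV "sigma_sets UNIV (GP as bs)"
    by (rule sigma_algebra_sigma_sets) simp
  have step1: "A \<times> B \<in> sigma_sets UNIV (GP as bs)" if A: "A \<in> GX as" and B: "B \<in> sigma_sets UNIV (GX bs)" for A B
    using B
  proof (induction rule: sigma_sets.induct)
    case (Basic a) then show ?case using A unfolding GP_def by (blast intro: sigma_sets.Basic)
  next
    case Empty then show ?case by simp
  next
    case (Compl a)
    have "A \<times> UNIV \<in> sigma_sets UNIV (GP as bs)" using A UNIV_GX unfolding GP_def by (blast intro: sigma_sets.Basic)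
    moreover have "A \<times> (UNIV - a) = (A \<times> UNIV) - (A \<times> a)" by auto
    ultimately show ?case using Compl(2) by (simp add: sa.Diff)
  next
    case (Union a)
    have "A \<times> (\<Union>i. a i) = (\<Union>i. A \<times> a i)" by auto
    then show ?case using Union(2) by (simp add: sigma_sets.Union)
  qed
  show ?thesis using A
  proof (induction rule: sigma_sets.induct)
    case (Basic a) then show ?case using step1 B by blast
  next
    case Empty then show ?case by simp
  next
    case (Compl a)
    have "UNIV \<times> B \<in> sigma_sets UNIV (GP as bs)" using step1[OF UNIV_GX B] .
    moreover have "(UNIV - a) \<times> B = (UNIV \<times> B) - (a \<times> B)" by auto
    ultimately show ?case using Compl(2) by (simp add: sa.Diff)
  next
    case (Union a)
    have "(\<Union>i. a i) \<times> B = (\<Union>i. a i \<times> B)" by auto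
    then show ?case using Union(2) by (simp add: sigma_sets.Union)
  qed
qed

lemma marg_null:
  assumes sK: "sets K = sets (borel \<Otimes>\<^sub>M borel)"
    and f: "distr K borel fst = M" and g: "distr K borel snd = N"
  shows "N1 \<in> null_sets M \<Longrightarrow> fst -` N1 \<in> null_sets K"
    and "N2 \<in> null_sets N \<Longrightarrow> snd -` N2 \<in> null_sets K"
proof -
  have sp: "space K = UNIV" using sets_eq_imp_space_eq[OF sK] by (simp add: space_pair_measure)
  have mK: "measurable K = measurable (borel \<Otimes>\<^sub>M borel)" by (rule ext, rule measurable_cong_sets[OF sK refl])
  have fm: "fst \<in> measurable K borel" and sm: "snd \<in> measurable K borel" unfolding mK by auto
  show "fst -` N1 \<in> null_sets K" if "N1 \<in> null_sets M"
  proof -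
    have N1: "N1 \<in> sets borel" using that f[symmetric] by (auto simp: null_sets_def)
    have "emeasure K (fst -` N1 \<inter> space K) = emeasure M N1"
      using emeasure_distr[OF fm N1] f by simp
    moreover have "fst -` N1 \<inter> space K \<in> sets K" using fm N1 by (rule measurable_sets)
    ultimately show ?thesis using that sp by (auto simp: null_sets_def)
  qed
  show "snd -` N2 \<in> null_sets K" if "N2 \<in> null_sets N"
  proof -
    have N2: "N2 \<in> sets borel" using that g[symmetric] by (auto simp: null_sets_def)
    have "emeasure K (snd -` N2 \<inter> space K) = emeasure N N2"
      using emeasure_distr[OF sm N2] g by simp
    moreover have "snd -` N2 \<inter> space K \<in> sets K" using sm N2 by (rule measurable_sets)
    ultimately show ?thesis using that sp by (auto simp: null_sets_def)
  qed
qed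

lemma finite_nets:
  assumes "compact (UNIV::'a::metric_space set)"
  shows "\<exists>D :: nat \<Rightarrow> 'a set. (\<forall>k. finite (D k)) \<and> (\<forall>k x. \<exists>d\<in>D k. dist d x < inverse (real (Suc k)))"
proof -
  have "\<exists>D. finite D \<and> (\<forall>x::'a. \<exists>d\<in>D. dist d x < inverse (real (Suc k)))" for k
  proof -
    let ?r = "inverse (real (Suc k))"
    have cov: "(UNIV::'a set) \<subseteq> \<Union> ((\<lambda>x. ball x ?r) ` UNIV)" by auto
    obtain D where D: "finite D" "(UNIV::'a set) \<subseteq> \<Union> ((\<lambda>x. ball x ?r) ` D)"
      using compactE_image[OF assms _ cov] by auto
    have "\<forall>x::'a. \<exists>d\<in>D. dist d x < ?r"
    proof
      fix x :: 'a
      from D(2) have "x \<in> \<Union> ((\<lambda>x. ball x ?r) ` D)" by blast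
      then show "\<exists>d\<in>D. dist d x < ?r" by auto
    qed
    with D(1) show ?thesis by blast
  qed
  then have "\<forall>k. \<exists>D. finite D \<and> (\<forall>x::'a. \<exists>d\<in>D. dist d x < inverse (real (Suc k)))" by blast
  then obtain D where "\<forall>k. finite (D k) \<and> (\<forall>x::'a. \<exists>d\<in>D k. dist d x < inverse (real (Suc k)))"
    by (auto dest: choice)
  then show ?thesis by blast
qed

lemma supp_null:
  fixes M :: "'a::metric_space measure"
  assumes "cmmps M T"
  shows "\<exists>N0 \<in> null_sets M. UNIV - supp M \<subseteq> N0"
proof -
  note MD = cmmps_D[OF assms]
  obtain D :: "nat \<Rightarrow> 'a set" where D0: "(\<forall>k. finite (D k)) \<and> (\<forall>k x. \<exists>d\<in>D k. dist d x < inverse (real (Suc k)))"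
    using finite_nets[OF MD(4)] by blast
  have D: "\<And>k. finite (D k)" "\<And>k x. \<exists>d\<in>D k. dist d x < inverse (real (Suc k))" using D0 by auto
  define N0 where "N0 = (\<Union>k. \<Union>d\<in>{d\<in>D k. emeasure M (ball d (inverse (real (Suc k)))) = 0}. ball d (inverse (real (Suc k))))"
  have bs: "ball d r \<in> sets M" for d :: 'a and r using MD(2) by simp
  have "N0 \<in> null_sets M" unfolding N0_def
  proof (rule null_sets_UN')
    fix k :: nat
    show "(\<Union>d\<in>{d\<in>D k. emeasure M (ball d (inverse (real (Suc k)))) = 0}. ball d (inverse (real (Suc k)))) \<in> null_sets M"
      by (rule null_sets_UN') (use D(1)[of k] bs in \<open>auto intro: countable_finite\<close>)
  qed simp
  moreover have "UNIV - supp M \<subseteq> N0"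
  proof
    fix x assume "x \<in> UNIV - supp M"
    then obtain U where U: "open U" "x \<in> U" "\<not> emeasure M U > 0" unfolding supp_def by auto
    then have U0: "emeasure M U = 0" by (simp add: not_gr_zero)
    obtain e where e: "e > 0" "ball x e \<subseteq> U" using U open_contains_ball by blast
    obtain k where k: "inverse (real (Suc k)) < e / 2" using reals_Archimedean[of "e/2"] e by auto
    obtain d where d: "d \<in> D k" "dist d x < inverse (real (Suc k))" using D(2) by blast
    have sub: "ball d (inverse (real (Suc k))) \<subseteq> U"
    proof
      fix y assume "y \<in> ball d (inverse (real (Suc k)))"
      then have "dist x y < e" using d k dist_triangle[of x y d] by (simp add: dist_commute)
      then show "y \<in> U" using e by auto
    qed
    have "emeasure M (ball d (inverse (real (Suc k)))) = 0"
      using emeasure_mono[OF sub, of M] U0 MD(2) U(1) by simp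
    then show "x \<in> N0" unfolding N0_def using d by (auto simp: dist_commute)
  qed
  ultimately show ?thesis by blast
qed

lemma approx_sets:
  fixes M :: "'a::metric_space measure" and as :: "nat \<Rightarrow> 'a"
  assumes M: "cmmps M T" and dense: "supp M \<subseteq> closure (as ` {1..})"
    and A: "A \<in> sets borel"
  shows "\<exists>A' \<in> sigma_sets UNIV (GX as). \<exists>N \<in> null_sets M. (A - A') \<union> (A' - A) \<subseteq> N"
proof -
  obtain N0 where N0: "N0 \<in> null_sets M" "UNIV - supp M \<subseteq> N0" using supp_null[OF M] by blast
  have ball_GX: "ball (as r) q \<in> GX as" if "r \<ge> 1" for r q
  proof -
    have "ball (as r) q = EXs as {r} (\<lambda>_. q)" unfolding EXs_def by (auto simp: dist_commute)
    then show ?thesis unfolding GX_def using that by auto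
  qed
  have "A \<in> sigma_sets UNIV {S. open S}" using A by (simp add: sets_borel)
  then show ?thesis
  proof (induction rule: sigma_sets.induct)
    case (Basic U)
    then have U: "open U" by simp
    define U' where "U' = (\<Union>r. \<Union>n. if r \<ge> 1 \<and> ball (as r) (inverse (real (Suc n))) \<subseteq> U then ball (as r) (inverse (real (Suc n))) else {})"
    have bs: "ball (as r) q \<in> sigma_sets UNIV (GX as)" if "r \<ge> 1" for r q
      by (rule sigma_sets.Basic, rule ball_GX[OF that])
    have "U' \<in> sigma_sets UNIV (GX as)" unfolding U'_def
      by (intro sigma_sets.Union) (auto intro: bs sigma_sets.Empty)
    moreover have "U' \<subseteq> U" unfolding U'_def by (auto split: if_splits)
    moreover have "U - U' \<subseteq> N0"
    proof
      fix x assume x: "x \<in> U - U'"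
      show "x \<in> N0"
      proof (rule ccontr)
        assume "x \<notin> N0"
        then have "x \<in> supp M" using N0(2) by auto
        then have xc: "x \<in> closure (as ` {1..})" using dense by auto
        obtain e where e: "e > 0" "ball x e \<subseteq> U" using U x open_contains_ball by blast
        obtain n where n: "inverse (real (Suc n)) < e / 2" using reals_Archimedean[of "e/2"] e by auto
        obtain y where y: "y \<in> as ` {1..}" "dist y x < inverse (real (Suc n))"
          using xc unfolding closure_approachable by (meson inverse_positive_iff_positive of_nat_0_less_iff zero_less_Suc)
        then obtain r where r: "r \<ge> 1" "y = as r" by auto
        have sub: "ball (as r) (inverse (real (Suc n))) \<subseteq> U"
        proof
          fix z assume "z \<in> ball (as r) (inverse (real (Suc n)))"
          then have "dist x z < e" using y r n dist_triangle[of x z y] by (simp add: dist_commute)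
          then show "z \<in> U" using e by auto
        qed
        have "x \<in> ball (as r) (inverse (real (Suc n)))" using y r by simp
        then have "x \<in> (if r \<ge> 1 \<and> ball (as r) (inverse (real (Suc n))) \<subseteq> U then ball (as r) (inverse (real (Suc n))) else {})"
          using sub r by simp
        then have "x \<in> U'" unfolding U'_def by blast
        then show False using x by simp
      qed
    qed
    ultimately show ?case using N0(1) by (intro bexI[of _ U'] bexI[of _ N0]) auto
  next
    case Empty
    show ?case by (intro bexI[of _ "{}"]) (auto intro: sigma_sets.Empty)
  next
    case (Compl a)
    then obtain a' N where "a' \<in> sigma_sets UNIV (GX as)" "N \<in> null_sets M" "(a - a') \<union> (a' - a) \<subseteq> N" by blast
    then show ?case by (intro bexI[of _ "UNIV - a'"] bexI[of _ N]) (auto intro: sigma_sets.Compl)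
  next
    case (Union a)
    then have "\<forall>i. \<exists>a' N. a' \<in> sigma_sets UNIV (GX as) \<and> N \<in> null_sets M \<and> (a i - a') \<union> (a' - a i) \<subseteq> N" by blast
    then obtain a' N where aN: "\<And>i. a' i \<in> sigma_sets UNIV (GX as)" "\<And>i. N i \<in> null_sets M"
      "\<And>i. (a i - a' i) \<union> (a' i - a i) \<subseteq> N i" by metis
    have "(\<Union>i. a' i) \<in> sigma_sets UNIV (GX as)" using aN(1) by (rule sigma_sets.Union)
    moreover have "(\<Union>i. N i) \<in> null_sets M" using aN(2) by (rule null_sets_UN)
    moreover have "((\<Union>i. a i) - (\<Union>i. a' i)) \<union> ((\<Union>i. a' i) - (\<Union>i. a i)) \<subseteq> (\<Union>i. N i)"
      using aN(3) by blast
    ultimately show ?case by blast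
  qed
qed

lemma rect_ae:
  assumes K: "K \<in> joinings M N T S"
    and N1: "N1 \<in> null_sets M" "(A - A') \<union> (A' - A) \<subseteq> N1"
    and N2: "N2 \<in> null_sets N" "(B - B') \<union> (B' - B) \<subseteq> N2"
    and sets: "A \<in> sets borel" "A' \<in> sets borel" "B \<in> sets borel" "B' \<in> sets borel"
  shows "emeasure K (A \<times> B) = emeasure K (A' \<times> B')"
proof -
  have sK: "sets K = sets (borel \<Otimes>\<^sub>M borel)" and f: "distr K borel fst = M" and g: "distr K borel snd = N"
    using K unfolding joinings_def by auto
  have nul: "fst -` N1 \<union> snd -` N2 \<in> null_sets K"
    using marg_null(1)[OF sK f g N1(1)] marg_null(2)[OF sK f g N2(1)] by (rule null_sets.Un)
  have "AE w in K. w \<in> A \<times> B \<longleftrightarrow> w \<in> A' \<times> B'"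
    by (rule AE_I'[OF nul]) (use N1(2) N2(2) in \<open>auto simp: mem_Times_iff\<close>)
  moreover have "A \<times> B \<in> sets K" "A' \<times> B' \<in> sets K" unfolding sK using sets by (auto intro: pair_measureI)
  ultimately show ?thesis by (rule emeasure_eq_AE)
qed

lemma W_bounded:
  fixes T :: "'a::metric_space \<Rightarrow> 'a" and S :: "'b::metric_space \<Rightarrow> 'b"
  assumes K1: "prob_space K1" "sets K1 = sets (borel \<Otimes>\<^sub>M borel)"
    and K2: "prob_space K2" "sets K2 = sets (borel \<Otimes>\<^sub>M borel)"
    and B: "\<And>x y::'a. dist x y \<le> B" "\<And>x y::'b. dist x y \<le> B" "0 \<le> B"
    and p: "p > 0"
  shows "wasserstein p (aidx_set 1 1 R) (array_law 1 1 R T S as bs K1) (array_law 1 1 R T S as bs K2)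
     \<le> (sqrt (real (card (aidx_set 1 1 R)) * B\<^sup>2) powr p) powr (1 / p)"
proof -
  let ?c = "sqrt (real (card (aidx_set 1 1 R)) * B\<^sup>2) powr p"
  let ?INF = "INF C \<in> couplings (aidx_set 1 1 R) (array_law 1 1 R T S as bs K1) (array_law 1 1 R T S as bs K2).
        \<integral>\<^sup>+ w. ennreal (eucl_dist (aidx_set 1 1 R) (fst w) (snd w) powr p) \<partial>C"
  obtain C0 where C0: "C0 \<in> couplings (aidx_set 1 1 R) (array_law 1 1 R T S as bs K1) (array_law 1 1 R T S as bs K2)"
    "(\<integral>\<^sup>+ w. ennreal (eucl_dist (aidx_set 1 1 R) (fst w) (snd w) powr p) \<partial>C0) \<le> ennreal ?c"
    using bounded_coupling[OF K1 K2 B p, of R T S as bs] by blast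
  have "?INF \<le> ennreal ?c" using C0 by (meson INF_lower order_trans)
  then have "enn2real ?INF \<le> enn2real (ennreal ?c)" by (intro enn2real_mono) auto
  then have le: "enn2real ?INF \<le> ?c" by simp
  show ?thesis unfolding wasserstein_def
    by (rule powr_mono2) (use p le in auto)
qed

theorem theorem17:
  fixes M :: "'a::metric_space measure" and N :: "'b::metric_space measure"
    and T :: "'a \<Rightarrow> 'a" and S :: "'b \<Rightarrow> 'b"
    and as :: "nat \<Rightarrow> 'a" and bs :: "nat \<Rightarrow> 'b" and p :: real
  assumes "cmmps M T" and "cmmps N S"
    and "as ` {1..} \<subseteq> supp M" and "supp M \<subseteq> closure (as ` {1..})"
    and "bs ` {1..} \<subseteq> supp N" and "supp N \<subseteq> closure (bs ` {1..})"
    and "p \<ge> 1"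
  shows "(\<forall>n m R. n \<ge> 1 \<longrightarrow> m \<ge> 1 \<longrightarrow> R \<ge> 1 \<longrightarrow> Dep n m R p M N T S as bs = 0)
     \<longleftrightarrow> joinings M N T S = {M \<Otimes>\<^sub>M N}"
proof -
  note MD = cmmps_D[OF assms(1)] and ND = cmmps_D[OF assms(2)]
  have p: "p > 0" using assms(7) by simp
  obtain B1 where B1: "B1 \<ge> 0" "\<And>x y::'a. dist x y \<le> B1" using dist_bound[OF MD(4)] by blast
  obtain B2 where B2: "B2 \<ge> 0" "\<And>x y::'b. dist x y \<le> B2" using dist_bound[OF ND(4)] by blast
  define B where "B = max B1 B2"
  have B: "\<And>x y::'a. dist x y \<le> B" "\<And>x y::'b. dist x y \<le> B" "0 \<le> B"
    unfolding B_def using B1 B2 by (auto intro: max.coboundedI1 max.coboundedI2)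
  have pj: "M \<Otimes>\<^sub>M N \<in> joinings M N T S" by (rule prod_joining[OF assms(1,2)])
  have MN: "prob_space (M \<Otimes>\<^sub>M N)" "sets (M \<Otimes>\<^sub>M N) = sets (borel \<Otimes>\<^sub>M borel)"
    using pj unfolding joinings_def by auto
  show ?thesis
  proof
    assume H: "\<forall>n m R. n \<ge> 1 \<longrightarrow> m \<ge> 1 \<longrightarrow> R \<ge> 1 \<longrightarrow> Dep n m R p M N T S as bs = 0"
    have "joinings M N T S \<subseteq> {M \<Otimes>\<^sub>M N}"
    proof
      fix L assume LJ: "L \<in> joinings M N T S"
      have L: "prob_space L" "sets L = sets (borel \<Otimes>\<^sub>M borel)"
        using LJ unfolding joinings_def by auto
      have W: "wasserstein p (aidx_set 1 1 R) (array_law 1 1 R T S as bs L) (array_law 1 1 R T S as bs (M \<Otimes>\<^sub>M N)) = 0"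
        if R: "R \<ge> 1" for R
      proof -
        let ?W = "\<lambda>L. wasserstein p (aidx_set 1 1 R) (array_law 1 1 R T S as bs L) (array_law 1 1 R T S as bs (M \<Otimes>\<^sub>M N))"
        have bdd: "bdd_above (?W ` joinings M N T S)"
        proof (rule bdd_aboveI2)
          fix L' assume "L' \<in> joinings M N T S"
          then have "prob_space L'" "sets L' = sets (borel \<Otimes>\<^sub>M borel)" unfolding joinings_def by auto
          then show "?W L' \<le> (sqrt (real (card (aidx_set 1 1 R)) * B\<^sup>2) powr p) powr (1 / p)"
            by (rule W_bounded[OF _ _ MN B p])
        qed
        have "?W L \<le> (SUP L' \<in> joinings M N T S. ?W L')" by (rule cSUP_upper[OF LJ bdd])
        also have "\<dots> = Dep 1 1 R p M N T S as bs" unfolding Dep_def ..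
        also have "\<dots> = 0" using H R by auto
        finally have "?W L \<le> 0" .
        moreover have "?W L \<ge> 0" unfolding wasserstein_def by simp
        ultimately show ?thesis by simp
      qed
      have agree: "emeasure L X = emeasure (M \<Otimes>\<^sub>M N) X" if "X \<in> sigma_sets UNIV (GP as bs)" for X
      proof (rule agree_sigma[OF L MN _ that])
        fix X assume "X \<in> GP as bs"
        then obtain F c G s where X: "X = EXs as F c \<times> EXs bs G s" "finite F" "F \<subseteq> {1..}" "finite G" "G \<subseteq> {1..}"
          unfolding GP_def GX_def by blast
        show "emeasure L X = emeasure (M \<Otimes>\<^sub>M N) X"
          unfolding X(1) by (rule agree_on_rects[OF L MN B p W X(2,3,4,5)])
      qed
      have "M \<Otimes>\<^sub>M N = L"
      proof (rule pair_measure_eqI)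
        show "sigma_finite_measure M" using MD(1) by (simp add: prob_space_imp_sigma_finite)
        show "sigma_finite_measure N" using ND(1) by (simp add: prob_space_imp_sigma_finite)
        show "sets (M \<Otimes>\<^sub>M N) = sets L" using MN(2) L(2) by simp
      next
        fix A B assume A: "A \<in> sets M" and B: "B \<in> sets N"
        have Ab: "A \<in> sets borel" and Bb: "B \<in> sets borel" using A B MD(2) ND(2) by auto
        obtain A' N1 where A': "A' \<in> sigma_sets UNIV (GX as)" "N1 \<in> null_sets M" "(A - A') \<union> (A' - A) \<subseteq> N1"
          using approx_sets[OF assms(1) assms(4) Ab] by blast
        obtain B' N2 where B': "B' \<in> sigma_sets UNIV (GX bs)" "N2 \<in> null_sets N" "(B - B') \<union> (B' - B) \<subseteq> N2"
          using approx_sets[OF assms(2) assms(6) Bb] by blast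
        have A'b: "A' \<in> sets borel" and B'b: "B' \<in> sets borel" using A'(1) B'(1) sigma_GX_sets by blast+
        interpret Np: prob_space N by (rule ND(1))
        have "emeasure M A * emeasure N B = emeasure (M \<Otimes>\<^sub>M N) (A \<times> B)"
          by (rule Np.emeasure_pair_measure_Times[symmetric, OF A B])
        also have "\<dots> = emeasure (M \<Otimes>\<^sub>M N) (A' \<times> B')"
          by (rule rect_ae[OF pj A'(2,3) B'(2,3) Ab A'b Bb B'b])
        also have "\<dots> = emeasure L (A' \<times> B')"
          by (rule agree[symmetric, OF rect_sigma[OF A'(1) B'(1)]])
        also have "\<dots> = emeasure L (A \<times> B)"
          by (rule rect_ae[symmetric, OF LJ A'(2,3) B'(2,3) Ab A'b Bb B'b])
        finally show "emeasure M A * emeasure N B = emeasure L (A \<times> B)" .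
      qed
      then show "L \<in> {M \<Otimes>\<^sub>M N}" by simp
    qed
    then show "joinings M N T S = {M \<Otimes>\<^sub>M N}" using pj by blast
  next
    assume J: "joinings M N T S = {M \<Otimes>\<^sub>M N}"
    show "\<forall>n m R. n \<ge> 1 \<longrightarrow> m \<ge> 1 \<longrightarrow> R \<ge> 1 \<longrightarrow> Dep n m R p M N T S as bs = 0"
      by (simp add: Dep_def J wasserstein_self)
  qed
qed

end
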